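(* Let $X$ be a standard (mean $0$, variance $1$) Gaussian, let $x,\hat x\in\mathbb R$, let $Z$ have the law of $X+x$ conditioned on $X+x>0$, and let $\hat Z$ have the law of $X+\hat x$ conditioned on $X+\hat x>0$. Then there is a coupling of $Z$ and $\hat Z$ such that $|Z-\hat Z|<|x-\hat x|$ almost surely if $x\neq\hat x$. Moreover, there is a continuous function $\delta(x,\hat x)$ with $\delta(x,\hat x)<1$ for all $x,\hat x$ such that under this coupling $\mathbf E[|Z-\hat Z|]\le\delta(x,\hat x)|x-\hat x|$. *)

theory Defs
  imports "HOL-Probability.Probability"
begin

definition std_gauss :: "real measure" where
  "std_gauss = density lborel std_normal_density"

definition cond_shifted_gauss :: "real \<Rightarrow> real measure" where
  "cond_shifted_gauss x = uniform_measure (distr std_gauss borel (\<lambda>t. t + x)) {0<..}"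

definition is_coupling :: "(real \<times> real) measure \<Rightarrow> real measure \<Rightarrow> real measure \<Rightarrow> bool" where
  "is_coupling mu P Q \<longleftrightarrow> prob_space mu \<and> sets mu = sets (borel \<Otimes>\<^sub>M borel)
     \<and> distr mu borel fst = P \<and> distr mu borel snd = Q"

end

theory Submission
  imports Defs
begin

abbreviation "\<phi> \<equiv> std_normal_density"

definition Sg :: "real \<Rightarrow> real" where "Sg u = measure std_gauss {u<..}"

lemma sg_prob: "prob_space std_gauss"
  unfolding std_gauss_def using real_dist_normal_dist real_distribution_def by blast

lemma sg_sets[simp, measurable_cong]: "sets std_gauss = sets borel"
  unfolding std_gauss_def by simp

lemma sg_space[simp]: "space std_gauss = UNIV"
  unfolding std_gauss_def by simp

lemma phi_pos: "0 < \<phi> x" by (simp add: normal_density_pos)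

lemma phi_cont[continuous_intros]: "continuous_on A \<phi>"
  unfolding normal_density_def by (intro continuous_intros) auto

lemma sg_emeasure: "A \<in> sets borel \<Longrightarrow> emeasure std_gauss A = (\<integral>\<^sup>+ s. ennreal (\<phi> s) * indicator A s \<partial>lborel)"
  unfolding std_gauss_def by (simp add: emeasure_density)

lemma sg_measure: "A \<in> sets borel \<Longrightarrow> measure std_gauss A = (LINT s|lborel. indicator A s * \<phi> s)"
proof -
  assume A: "A \<in> sets borel"
  have int: "integrable lborel (\<lambda>s. indicator A s * \<phi> s)"
    using integrable_mult_indicator[of A lborel \<phi>] A integrable_normal_density[of 1 0] by simp
  have "emeasure std_gauss A = ennreal (LINT s|lborel. indicator A s * \<phi> s)"
    unfolding sg_emeasure[OF A]
    by (subst nn_integral_eq_integral[symmetric]) (auto simp: int intro!: nn_integral_cong split: split_indicator)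
  then show ?thesis using A
    by (simp add: measure_def) 
qed

lemma shift_nn: fixes g :: "real \<Rightarrow> ennreal" assumes [measurable]: "g \<in> borel_measurable borel"
  shows "(\<integral>\<^sup>+ s. g s \<partial>lborel) = (\<integral>\<^sup>+ s. g (e + s) \<partial>lborel)"
  using nn_integral_real_affine[OF assms, of 1 e] by simp

lemma phi_shift: "\<phi> (e + s) = exp (- e\<^sup>2 / 2 - e * s) * \<phi> s"
proof -
  have "- (e + s)\<^sup>2 / 2 = (- e\<^sup>2 / 2 - e * s) + (- s\<^sup>2 / 2)"
    by (simp add: power2_eq_square field_simps)
  then have "exp (- (e + s)\<^sup>2 / 2) = exp (- e\<^sup>2 / 2 - e * s) * exp (- s\<^sup>2 / 2)"
    by (simp add: exp_add[symmetric])
  then show ?thesis unfolding normal_density_def by simp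
qed

interpretation sgp: prob_space std_gauss by (rule sg_prob)

lemma sg_shift_eq: assumes B: "B \<in> sets borel"
  shows "emeasure std_gauss {s. s - e \<in> B} = (\<integral>\<^sup>+ s. ennreal (\<phi> (e + s)) * indicator B s \<partial>lborel)"
proof -
  have m: "{s. s - e \<in> B} \<in> sets borel" using B by measurable
  show ?thesis
    unfolding sg_emeasure[OF m]
    by (subst shift_nn[where e=e]) (use B in \<open>auto simp: indicator_def\<close>)
qed

lemma sg_shift_ge: assumes B: "B \<in> sets borel" and c: "0 \<le> c" and h: "\<And>s. s \<in> B \<Longrightarrow> c * \<phi> s \<le> \<phi> (e + s)"
  shows "c * measure std_gauss B \<le> measure std_gauss {s. s - e \<in> B}"
proof -
  have m: "{s. s - e \<in> B} \<in> sets borel" using B by measurable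
  have "ennreal c * emeasure std_gauss B = (\<integral>\<^sup>+ s. ennreal (c * \<phi> s) * indicator B s \<partial>lborel)"
    unfolding sg_emeasure[OF B] using B c
    by (subst nn_integral_cmult[symmetric]) (auto intro!: nn_integral_cong simp: ennreal_mult mult.assoc)
  also have "\<dots> \<le> (\<integral>\<^sup>+ s. ennreal (\<phi> (e + s)) * indicator B s \<partial>lborel)"
    by (intro nn_integral_mono) (auto simp: h indicator_def intro!: ennreal_leI)
  also have "\<dots> = emeasure std_gauss {s. s - e \<in> B}" using sg_shift_eq[OF B] by simp
  finally show ?thesis using c B m
    by (simp add: sgp.emeasure_eq_measure ennreal_mult[symmetric])
qed

lemma sg_shift_le: assumes B: "B \<in> sets borel" and c: "0 \<le> c" and h: "\<And>s. s \<in> B \<Longrightarrow> \<phi> (e + s) \<le> c * \<phi> s"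
  shows "measure std_gauss {s. s - e \<in> B} \<le> c * measure std_gauss B"
proof -
  have m: "{s. s - e \<in> B} \<in> sets borel" using B by measurable
  have "ennreal c * emeasure std_gauss B = (\<integral>\<^sup>+ s. ennreal (c * \<phi> s) * indicator B s \<partial>lborel)"
    unfolding sg_emeasure[OF B] using B c
    by (subst nn_integral_cmult[symmetric]) (auto intro!: nn_integral_cong simp: ennreal_mult mult.assoc)
  also have "\<dots> \<ge> (\<integral>\<^sup>+ s. ennreal (\<phi> (e + s)) * indicator B s \<partial>lborel)"
    by (intro nn_integral_mono) (auto simp: h indicator_def intro!: ennreal_leI)
  also have "(\<integral>\<^sup>+ s. ennreal (\<phi> (e + s)) * indicator B s \<partial>lborel) = emeasure std_gauss {s. s - e \<in> B}" using sg_shift_eq[OF B] by simp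
  finally show ?thesis using c B m
    by (simp add: sgp.emeasure_eq_measure ennreal_mult[symmetric])
qed

lemma Sg_split: assumes "u \<le> w" shows "Sg u = measure std_gauss {u<..w} + Sg w"
proof -
  have "{u<..} = {u<..w} \<union> {w<..}" using assms by auto
  then show ?thesis unfolding Sg_def
    by (metis sgp.finite_measure_Union sets_lborel sg_sets atLeastAtMost_iff greaterThanAtMost_borel greaterThan_borel
        disjoint_iff greaterThanAtMost_iff greaterThan_iff not_less)
qed

lemma Sg_logconc: assumes "u < v" "0 \<le> t"
  shows "Sg (v + t) * Sg u \<le> Sg (u + t) * Sg v"
proof -
  define e where "e = v - u"
  define c where "c = exp (- e\<^sup>2 / 2 - e * (u + t))"
  have e: "e > 0" using assms e_def by simp
  have c: "c \<ge> 0" unfolding c_def by simp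
  have A: "c * measure std_gauss {u<..u+t} \<le> measure std_gauss {s. s - e \<in> {u<..u+t}}"
  proof (rule sg_shift_ge)
    fix s assume "s \<in> {u<..u+t}"
    then have "- e\<^sup>2 / 2 - e * (u + t) \<le> - e\<^sup>2 / 2 - e * s" using e by (simp add: mult_left_mono)
    then show "c * \<phi> s \<le> \<phi> (e + s)" unfolding phi_shift c_def
      by (intro mult_right_mono) (auto simp: less_imp_le[OF phi_pos])
  qed (use c in auto)
  have B: "measure std_gauss {s. s - e \<in> {u+t<..}} \<le> c * measure std_gauss {u+t<..}"
  proof (rule sg_shift_le)
    fix s assume "s \<in> {u+t<..}"
    then have "- e\<^sup>2 / 2 - e * (u + t) \<ge> - e\<^sup>2 / 2 - e * s" using e by (simp add: mult_left_mono)
    then show "\<phi> (e + s) \<le> c * \<phi> s" unfolding phi_shift c_def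
      by (intro mult_right_mono) (auto simp: less_imp_le[OF phi_pos])
  qed (use c in auto)
  have s1: "{s. s - e \<in> {u<..u+t}} = {v<..v+t}" unfolding e_def by auto
  have s2: "{s. s - e \<in> {u+t<..}} = {v+t<..}" unfolding e_def by auto
  define Au where "Au = measure std_gauss {u<..u+t}"
  define Av where "Av = measure std_gauss {v<..v+t}"
  have A': "c * Au \<le> Av" using A s1 Au_def Av_def by simp
  have B': "Sg (v + t) \<le> c * Sg (u + t)" using B s2 Sg_def by simp
  have su: "Sg u = Au + Sg (u + t)" using Sg_split[of u "u+t"] assms Au_def by simp
  have sv: "Sg v = Av + Sg (v + t)" using Sg_split[of v "v+t"] assms Av_def by simp
  have nn: "0 \<le> Au" "0 \<le> Sg (u+t)" "0 \<le> Sg (v+t)" using Au_def Sg_def by auto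
  have "Sg (v + t) * Au \<le> c * Sg (u + t) * Au" using B' nn by (simp add: mult_right_mono)
  also have "\<dots> \<le> Sg (u + t) * Av" using A' nn by (metis mult.assoc mult.left_commute mult_left_mono)
  finally show ?thesis unfolding su sv by (simp add: algebra_simps)
qed

lemma Sg_diff_integral: assumes "a0 \<le> w" shows "Sg a0 - Sg w = integral {a0..w} \<phi>"
proof -
  have "Sg a0 - Sg w = measure std_gauss {a0<..w}" using Sg_split[OF assms] by simp
  also have "\<dots> = (LINT s|lborel. indicator {a0<..w} s * \<phi> s)" by (rule sg_measure) simp
  also have "\<dots> = (LINT s|lborel. indicator {a0..w} s * \<phi> s)"
    by (rule integral_cong_AE) (auto intro!: eventually_mono[OF AE_lborel_singleton[of a0]] simp: indicator_def)
  also have "\<dots> = integral {a0..w} \<phi>"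
    using set_borel_integral_eq_integral(2)[OF borel_integrable_atLeastAtMost'[OF phi_cont[of "{a0..w}"]]]
    by (simp add: set_lebesgue_integral_def)
  finally show ?thesis .
qed

lemma Sg_deriv: "(Sg has_real_derivative - \<phi> u) (at u)"
proof -
  define a0 where "a0 = u - 1"
  define b where "b = u + 1"
  have "((\<lambda>w. integral {a0..w} \<phi>) has_real_derivative \<phi> u) (at u within {a0..b})"
    by (rule integral_has_real_derivative) (auto simp: a0_def b_def intro: phi_cont)
  then have "((\<lambda>w. integral {a0..w} \<phi>) has_real_derivative \<phi> u) (at u)"
    by (simp add: at_within_Icc_at a0_def b_def)
  then have d: "((\<lambda>w. Sg a0 - integral {a0..w} \<phi>) has_real_derivative - \<phi> u) (at u)"
    by (intro derivative_eq_intros) auto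
  show ?thesis
  proof (rule has_field_derivative_transform_within_open[OF d, of "{a0<..<b}"])
    fix w assume "w \<in> {a0<..<b}"
    then show "Sg a0 - integral {a0..w} \<phi> = Sg w" using Sg_diff_integral[of a0 w] by simp
  qed (auto simp: a0_def b_def)
qed

lemma Sg_cont[continuous_intros]: "continuous_on A Sg"
  using Sg_deriv by (meson DERIV_isCont continuous_at_imp_continuous_on)

lemma Sg_strict: assumes "u < w" shows "Sg w < Sg u"
  by (rule DERIV_neg_imp_decreasing[OF assms]) (use Sg_deriv phi_pos in \<open>auto intro!: exI[of _ "- \<phi> _"]\<close>)

lemma Sg_nonneg: "0 \<le> Sg u" unfolding Sg_def by simp

lemma Sg_pos: "0 < Sg u"
  using Sg_strict[of u "u+1"] Sg_nonneg[of "u+1"] by simp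

lemma Sg_le1: "Sg u \<le> 1" unfolding Sg_def by simp

lemma Sg_lim_top: "(Sg \<longlongrightarrow> 0) at_top"
proof -
  have rd: "real_distribution std_gauss" unfolding std_gauss_def by (rule real_dist_normal_dist)
  have "Sg u = 1 - cdf std_gauss u" for u
  proof -
    have "{u<..} = UNIV - {..u}" by auto
    then show ?thesis unfolding Sg_def cdf_def
      using sgp.prob_compl[of "{..u}"] by simp
  qed
  moreover have "((\<lambda>u. 1 - cdf std_gauss u) \<longlongrightarrow> 1 - 1) at_top"
    by (intro tendsto_intros real_distribution.cdf_lim_at_top_prob[OF rd])
  ultimately have "Sg = (\<lambda>u. 1 - cdf std_gauss u)" "((\<lambda>u. 1 - cdf std_gauss u) \<longlongrightarrow> 0) at_top" by auto
  then show ?thesis by simp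
qed

lemma phi_deriv: "(\<phi> has_real_derivative - x * \<phi> x) (at x)"
  unfolding normal_density_def
  by (auto intro!: derivative_eq_intros simp: power2_eq_square field_simps)

lemma phi_lim_top: "(\<phi> \<longlongrightarrow> 0) at_top"
proof -
  have h: "filterlim (\<lambda>x::real. 1/2 * x) at_top at_top"
    by (rule filterlim_tendsto_pos_mult_at_top[OF tendsto_const _ filterlim_ident]) simp
  have "filterlim (\<lambda>x::real. x * (1/2 * x)) at_top at_top"
    by (rule filterlim_at_top_mult_at_top[OF filterlim_ident h])
  then have "filterlim (\<lambda>x::real. - (x * (1/2 * x))) at_bot at_top"
    by (simp add: filterlim_uminus_at_bot)
  then have "filterlim (\<lambda>x::real. - x\<^sup>2 / 2) at_bot at_top"
    by (simp add: power2_eq_square)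
  then have "((\<lambda>x::real. exp (- x\<^sup>2 / 2)) \<longlongrightarrow> 0) at_top"
    using filterlim_compose[OF exp_at_bot] by blast
  then have "((\<lambda>x::real. 1 / sqrt (2 * pi) * exp (- x\<^sup>2 / 2)) \<longlongrightarrow> 1 / sqrt (2 * pi) * 0) at_top"
    by (intro tendsto_intros)
  then show ?thesis unfolding normal_density_def by simp
qed

lemma tail_moment_nonneg: assumes "0 \<le> a0"
  shows "has_bochner_integral lborel (\<lambda>t. indicator {a0..} t * (t * \<phi> t)) (\<phi> a0)"
proof (rule has_bochner_integral_nn_integral)
  have "(\<integral>\<^sup>+t. ennreal (t * \<phi> t) * indicator {a0 ..} t \<partial>lborel) = 0 - (- \<phi> a0)"
    by (rule nn_integral_FTC_atLeast[where F="\<lambda>t. - \<phi> t"])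
       (use assms phi_pos in \<open>auto intro!: derivative_eq_intros phi_deriv[THEN DERIV_cong] tendsto_eq_intros phi_lim_top
           simp: less_imp_le\<close>)
  moreover have "(\<lambda>t. ennreal (indicator {a0..} t * (t * \<phi> t))) = (\<lambda>t. ennreal (t * \<phi> t) * indicator {a0..} t)"
    by (auto simp: indicator_def fun_eq_iff)
  ultimately show "(\<integral>\<^sup>+t. ennreal (indicator {a0..} t * (t * \<phi> t)) \<partial>lborel) = ennreal (\<phi> a0)"
    by simp
qed (use assms phi_pos in \<open>auto simp: less_imp_le indicator_def\<close>)

lemma tail_moment: "has_bochner_integral lborel (\<lambda>t. indicator {u<..} t * (t * \<phi> t)) (\<phi> u)"
proof (cases "0 \<le> u")
  case True
  show ?thesis
    by (rule has_bochner_integral_cong_AE[THEN iffD1, OF _ _ _ tail_moment_nonneg[OF True]])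
       (auto intro!: eventually_mono[OF AE_lborel_singleton[of u]] simp: indicator_def)
next
  case False
  have c: "continuous_on {u..0} (\<lambda>t. t * \<phi> t)" by (intro continuous_intros)
  have fin: "integral\<^sup>L lborel (\<lambda>t. indicator {u..0} t *\<^sub>R (t * \<phi> t)) = (- \<phi> 0) - (- \<phi> u)"
    by (rule integral_FTC_atLeastAtMost[where F="\<lambda>t. - \<phi> t"])
       (use False c in \<open>auto intro!: derivative_eq_intros phi_deriv[THEN DERIV_cong]
          simp: has_real_derivative_iff_has_vector_derivative[symmetric] intro: has_field_derivative_at_within\<close>)
  have fint: "integrable lborel (\<lambda>t. indicator {u..0} t *\<^sub>R (t * \<phi> t))"
    using borel_integrable_atLeastAtMost'[OF c] by (simp add: set_integrable_def)
  have "has_bochner_integral lborel (\<lambda>t. indicator {u..0} t *\<^sub>R (t * \<phi> t) + indicator {0..} t * (t * \<phi> t)) ((- \<phi> 0) - (- \<phi> u) + \<phi> 0)"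
    by (intro has_bochner_integral_add tail_moment_nonneg) (use fin fint in \<open>auto simp: has_bochner_integral_iff\<close>)
  then have h: "has_bochner_integral lborel (\<lambda>t. indicator {u..0} t *\<^sub>R (t * \<phi> t) + indicator {0..} t * (t * \<phi> t)) (\<phi> u)"
    by simp
  have "has_bochner_integral lborel (\<lambda>t. indicator {u..0} t *\<^sub>R (t * \<phi> t) + indicator {0..} t * (t * \<phi> t)) (\<phi> u)
     = has_bochner_integral lborel (\<lambda>t. indicator {u<..} t * (t * \<phi> t)) (\<phi> u)"
    by (rule has_bochner_integral_cong_AE)
       (use False in \<open>auto intro!: eventually_mono[OF AE_lborel_singleton[of u]] simp: indicator_def\<close>)
  then show ?thesis using h by simp
qed

lemma sg_integral: assumes [measurable]: "f \<in> borel_measurable borel"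
  shows "integral\<^sup>L std_gauss f = (LINT t|lborel. \<phi> t * f t)"
    and "integrable std_gauss f \<longleftrightarrow> integrable lborel (\<lambda>t. \<phi> t * f t)"
  unfolding std_gauss_def
  by (subst integral_density integrable_density; simp add: less_imp_le[OF phi_pos])+

lemma sg_tail_moment: "integrable std_gauss (\<lambda>t. indicator {u<..} t * t)"
   "(LINT t|std_gauss. indicator {u<..} t * t) = \<phi> u"
proof -
  have m: "(\<lambda>t. indicator {u<..} t * t) \<in> borel_measurable borel" by measurable
  have e: "(\<lambda>t. \<phi> t * (indicator {u<..} t * t)) = (\<lambda>t. indicator {u<..} t * (t * \<phi> t))"
    by (auto simp: fun_eq_iff)
  show "integrable std_gauss (\<lambda>t. indicator {u<..} t * t)"
    "(LINT t|std_gauss. indicator {u<..} t * t) = \<phi> u"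
    unfolding sg_integral[OF m] e using tail_moment[of u] by (auto simp: has_bochner_integral_iff)
qed

lemma one_div_ennreal: "0 < y \<Longrightarrow> 1 / ennreal y = ennreal (1 / y)"
  by (metis divide_ennreal ennreal_1 zero_le_one)

abbreviation "Dx x \<equiv> distr std_gauss borel (\<lambda>t. t + x)"

lemma Dx_emeasure: "A \<in> sets borel \<Longrightarrow> emeasure (Dx x) A = emeasure std_gauss {t. t + x \<in> A}"
  by (subst emeasure_distr) (auto simp: vimage_def)

lemma Dx_pos: "emeasure (Dx x) {0<..} = ennreal (Sg (-x))"
proof -
  have "{t. t + x \<in> {0<..}} = {-x<..}" by auto
  then show ?thesis by (simp add: Dx_emeasure Sg_def sgp.emeasure_eq_measure)
qed

lemma Dx_Ioc: "0 \<le> z \<Longrightarrow> emeasure (Dx x) {0<..z} = ennreal (Sg (-x) - Sg (z - x))"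
proof -
  assume z: "0 \<le> z"
  have "{t. t + x \<in> {0<..z}} = {-x<..z-x}" by auto
  moreover have "Sg (-x) = measure std_gauss {-x<..z-x} + Sg (z - x)" using Sg_split[of "-x" "z-x"] z by simp
  ultimately show ?thesis by (simp add: Dx_emeasure sgp.emeasure_eq_measure)
qed

lemma csg_def2: "cond_shifted_gauss x = density (Dx x) (\<lambda>z. ennreal (indicator {0<..} z / Sg (-x)))"
  unfolding cond_shifted_gauss_def uniform_measure_def Dx_pos
  by (intro density_cong) (auto simp: indicator_def one_div_ennreal Sg_pos)

lemma csg_sets[simp, measurable_cong]: "sets (cond_shifted_gauss x) = sets borel"
  by (simp add: cond_shifted_gauss_def)

lemma csg_space[simp]: "space (cond_shifted_gauss x) = UNIV"
  by (simp add: cond_shifted_gauss_def)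

lemma csg_prob: "prob_space (cond_shifted_gauss x)"
  unfolding cond_shifted_gauss_def
  by (rule prob_space_uniform_measure) (use Sg_pos[of "-x"] in \<open>auto simp: Dx_pos\<close>)

lemma csg_rd: "real_distribution (cond_shifted_gauss x)"
  using csg_prob by (auto simp: real_distribution_def real_distribution_axioms_def)

lemma csg_cdf_nonneg: assumes "0 \<le> z" shows "measure (cond_shifted_gauss x) {..z} = 1 - Sg (z - x) / Sg (-x)"
proof -
  have "emeasure (cond_shifted_gauss x) {..z} = emeasure (Dx x) ({0<..} \<inter> {..z}) / emeasure (Dx x) {0<..}"
    unfolding cond_shifted_gauss_def by (rule emeasure_uniform_measure) auto
  also have "{0<..} \<inter> {..z} = {0<..z}" by auto
  also have "emeasure (Dx x) {0<..z} / emeasure (Dx x) {0<..} = ennreal ((Sg (-x) - Sg (z - x)) / Sg (-x))"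
    unfolding Dx_Ioc[OF assms] Dx_pos
    using Sg_pos[of "-x"] Sg_strict[of "-x" "z-x"] assms
    by (subst divide_ennreal) (auto simp: less_eq_real_def)
  finally have e: "emeasure (cond_shifted_gauss x) {..z} = ennreal ((Sg (-x) - Sg (z - x)) / Sg (-x))" .
  have "0 \<le> (Sg (-x) - Sg (z - x)) / Sg (-x)"
    using Sg_pos[of "-x"] Sg_strict[of "-x" "z-x"] assms by (auto simp: less_eq_real_def)
  then have "measure (cond_shifted_gauss x) {..z} = (Sg (-x) - Sg (z - x)) / Sg (-x)"
    unfolding measure_def e by simp
  then show ?thesis using Sg_pos[of "-x"] by (simp add: field_simps)
qed

lemma csg_cdf_nonpos: assumes "z \<le> 0" shows "measure (cond_shifted_gauss x) {..z} = 0"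
proof -
  have "emeasure (cond_shifted_gauss x) {..z} = emeasure (Dx x) ({0<..} \<inter> {..z}) / emeasure (Dx x) {0<..}"
    unfolding cond_shifted_gauss_def by (rule emeasure_uniform_measure) auto
  also have "{0<..} \<inter> {..z} = {}" using assms by auto
  finally show ?thesis by (simp add: measure_def)
qed

lemma csg_AE_pos: "AE z in cond_shifted_gauss x. 0 < z"
  unfolding cond_shifted_gauss_def by (rule AE_uniform_measureI) auto

lemma csg_integral: assumes [measurable]: "f \<in> borel_measurable borel"
  shows "integral\<^sup>L (cond_shifted_gauss x) f = (LINT t|std_gauss. indicator {-x<..} t * f (t + x)) / Sg (-x)"
    and "integrable (cond_shifted_gauss x) f \<longleftrightarrow> integrable std_gauss (\<lambda>t. indicator {-x<..} t * f (t + x))"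
proof -
  have i: "\<And>t. indicator {0<..} (t + x) = (indicator {-x<..} t :: real)" by (auto simp: indicator_def)
  show "integral\<^sup>L (cond_shifted_gauss x) f = (LINT t|std_gauss. indicator {-x<..} t * f (t + x)) / Sg (-x)"
    unfolding csg_def2
    by (subst integral_density) (auto simp: integral_distr i Sg_pos less_imp_le)
  show "integrable (cond_shifted_gauss x) f \<longleftrightarrow> integrable std_gauss (\<lambda>t. indicator {-x<..} t * f (t + x))"
    unfolding csg_def2
    apply (subst integrable_density)
    using integrable_mult_right_iff[of std_gauss "\<lambda>t. indicator {-x<..} t * f (t + x)" "1 / Sg (-x)"] Sg_pos[of "-x"]
    by (auto simp: integrable_distr_eq i Sg_pos less_imp_le)
qed

definition mfun :: "real \<Rightarrow> real" where "mfun x = x + \<phi> x / Sg (-x)"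

lemma phi_even: "\<phi> (- x) = \<phi> x" by (simp add: normal_density_def)

lemma csg_mean: "integrable (cond_shifted_gauss x) (\<lambda>z. z)" "integral\<^sup>L (cond_shifted_gauss x) (\<lambda>z. z) = mfun x"
proof -
  have e: "(\<lambda>t. indicator {-x<..} t * (t + x)) = (\<lambda>t. indicator {-x<..} t * t + x * indicator {-x<..} t)"
    by (auto simp: fun_eq_iff algebra_simps)
  have i1: "integrable std_gauss (\<lambda>t. indicator {-x<..} t * t)" by (rule sg_tail_moment)
  have i2: "integrable std_gauss (\<lambda>t. x * indicator {-x<..} t)"
  proof -
    have "integrable std_gauss (\<lambda>t. indicator {-x<..} t :: real)"
      by (rule sgp.integrable_const_bound[where B=1]) (auto simp: indicator_def)
    then show ?thesis by simp
  qed
  have i2': "integral\<^sup>L std_gauss (indicator {-x<..} :: real \<Rightarrow> real) = Sg (-x)"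
    unfolding Sg_def by (simp add: sgp.emeasure_eq_measure)
  have mid: "(\<lambda>z::real. z) \<in> borel_measurable borel" by simp
  show "integrable (cond_shifted_gauss x) (\<lambda>z. z)"
    unfolding csg_integral(2)[of "\<lambda>z. z", OF mid] e using i1 i2 by auto
  have "integral\<^sup>L (cond_shifted_gauss x) (\<lambda>z. z) = (\<phi> (-x) + x * Sg (-x)) / Sg (-x)"
    unfolding csg_integral(1)[of "\<lambda>z. z", OF mid] e
    using i1 i2 by (simp add: sg_tail_moment(2) i2' Sg_def)
  then show "integral\<^sup>L (cond_shifted_gauss x) (\<lambda>z. z) = mfun x"
    unfolding mfun_def phi_even using Sg_pos[of "-x"] by (simp add: field_simps)
qed

lemma Sg_less_iff: "Sg a < Sg b \<longleftrightarrow> b < a"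
  using Sg_strict by (metis not_less_iff_gr_or_eq)

lemma Sg_le_iff: "Sg a \<le> Sg b \<longleftrightarrow> b \<le> a"
  using Sg_less_iff by (meson not_less)

lemma Sg_inj: "Sg a = Sg b \<longleftrightarrow> a = b"
  by (metis Sg_less_iff not_less_iff_gr_or_eq)

lemma Sg_surj: assumes "0 < c" "c < Sg v" shows "\<exists>t>v. Sg t = c"
proof -
  have "eventually (\<lambda>u. Sg u < c) at_top"
    using order_tendstoD(2)[OF Sg_lim_top assms(1)] .
  then obtain M where M: "\<And>u. u \<ge> M \<Longrightarrow> Sg u < c" by (auto simp: eventually_at_top_linorder)
  define M' where "M' = max M v"
  have "Sg M' < c" using M M'_def by simp
  moreover have "v \<le> M'" using M'_def by simp
  ultimately obtain t where t: "v \<le> t" "t \<le> M'" "Sg t = c"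
    using IVT2[of Sg M' c v] assms Sg_deriv DERIV_isCont by (metis less_imp_le)
  then have "t \<noteq> v" using assms by auto
  then show ?thesis using t by (intro exI[of _ t]) auto
qed

definition Tm :: "real \<Rightarrow> real \<Rightarrow> real \<Rightarrow> real" where
  "Tm x y z = (if z \<le> 0 then 0 else (THE t. Sg (t - y) * Sg (-x) = Sg (z - x) * Sg (-y)))"

lemma Tm_prop: assumes "0 < z"
  shows "Sg (Tm x y z - y) * Sg (-x) = Sg (z - x) * Sg (-y)" "0 < Tm x y z"
proof -
  define c where "c = Sg (z - x) * Sg (-y) / Sg (-x)"
  have "Sg (z - x) < Sg (-x)" using assms by (simp add: Sg_less_iff)
  then have "c < Sg (-y)" "0 < c" unfolding c_def using Sg_pos[of "-x"] Sg_pos[of "-y"] Sg_pos[of "z-x"]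
    by (auto simp: field_simps)
  then obtain t' where t': "t' > -y" "Sg t' = c" using Sg_surj by blast
  have ex: "\<exists>!t. Sg (t - y) * Sg (-x) = Sg (z - x) * Sg (-y)"
  proof
    show "Sg (t' + y - y) * Sg (-x) = Sg (z - x) * Sg (-y)" using t' Sg_pos[of "-x"] c_def by simp
  next
    fix t assume "Sg (t - y) * Sg (-x) = Sg (z - x) * Sg (-y)"
    then have "Sg (t - y) * Sg (-x) = Sg t' * Sg (-x)" using t' Sg_pos[of "-x"] c_def by (simp add: field_simps)
    then have "Sg (t - y) = Sg (t' + y - y)" using Sg_pos[of "-x"] by simp
    then show "t = t' + y" by (simp add: Sg_inj)
  qed
  have T: "Tm x y z = (THE t. Sg (t - y) * Sg (-x) = Sg (z - x) * Sg (-y))" using assms Tm_def by simp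
  show e: "Sg (Tm x y z - y) * Sg (-x) = Sg (z - x) * Sg (-y)"
    unfolding T by (rule theI'[OF ex])
  then have "Sg (Tm x y z - y) * Sg (-x) = c * Sg (-x)" using Sg_pos[of "-x"] c_def by (simp add: field_simps)
  then have "Sg (Tm x y z - y) = c" using Sg_pos[of "-x"] by simp
  then have "Tm x y z - y = t'" using t' Sg_inj by metis
  then show "0 < Tm x y z" using t' by simp
qed

lemma Tm_nonpos: "z \<le> 0 \<Longrightarrow> Tm x y z = 0" by (simp add: Tm_def)

lemma Tm_le_iff: assumes "0 < z" "0 < w" shows "Tm x y z \<le> Tm x y w \<longleftrightarrow> z \<le> w"
proof -
  have "Tm x y z \<le> Tm x y w \<longleftrightarrow> Sg (Tm x y w - y) \<le> Sg (Tm x y z - y)" by (simp add: Sg_le_iff)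
  also have "\<dots> \<longleftrightarrow> Sg (Tm x y w - y) * Sg (-x) \<le> Sg (Tm x y z - y) * Sg (-x)"
    using Sg_pos[of "-x"] by simp
  also have "\<dots> \<longleftrightarrow> Sg (w - x) * Sg (-y) \<le> Sg (z - x) * Sg (-y)" using Tm_prop assms by simp
  also have "\<dots> \<longleftrightarrow> z \<le> w" using Sg_pos[of "-y"] by (simp add: Sg_le_iff)
  finally show ?thesis .
qed

lemma Tm_mono: "mono (Tm x y)"
proof (rule monoI)
  fix z w :: real assume zw: "z \<le> w"
  show "Tm x y z \<le> Tm x y w"
  proof (cases "z \<le> 0")
    case True
    then show ?thesis using Tm_prop(2)[of w x y] Tm_nonpos[of z x y] Tm_nonpos[of w x y]
      by (cases "w \<le> 0") auto
  next
    case False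
    then show ?thesis using zw Tm_le_iff[of z w x y] by auto
  qed
qed

lemma Tm_meas[measurable]: "Tm x y \<in> borel_measurable borel"
  by (rule borel_measurable_mono[OF Tm_mono])

lemma Tm_distr: "distr (cond_shifted_gauss x) borel (Tm x y) = cond_shifted_gauss y"
proof -
  interpret P: prob_space "cond_shifted_gauss x" by (rule csg_prob)
  have rd1: "real_distribution (distr (cond_shifted_gauss x) borel (Tm x y))"
    by (rule P.real_distribution_distr) simp
  have rd2: "real_distribution (cond_shifted_gauss y)" by (rule csg_rd)
  show ?thesis
  proof (rule cdf_unique[OF rd1 rd2], rule ext)
    fix t
    have cd: "cdf (distr (cond_shifted_gauss x) borel (Tm x y)) t = measure (cond_shifted_gauss x) (Tm x y -` {..t})"
      unfolding cdf_def by (subst measure_distr) auto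
    show "cdf (distr (cond_shifted_gauss x) borel (Tm x y)) t = cdf (cond_shifted_gauss y) t"
    proof (cases "t \<le> 0")
      case True
      have "Tm x y -` {..t} \<subseteq> {..0}" using Tm_prop(2)[of _ x y] True by (force simp: not_le[symmetric])
      then have "measure (cond_shifted_gauss x) (Tm x y -` {..t}) \<le> measure (cond_shifted_gauss x) {..0}"
        by (intro P.finite_measure_mono) auto
      then have "measure (cond_shifted_gauss x) (Tm x y -` {..t}) = 0"
        using csg_cdf_nonpos[of 0 x] by (simp add: antisym)
      then show ?thesis using cd csg_cdf_nonpos[OF True, of y] by (simp add: cdf_def)
    next
      case False
      define c where "c = Sg (t - y) * Sg (-x) / Sg (-y)"
      have "Sg (t - y) < Sg (-y)" using False by (simp add: Sg_less_iff)
      then have "c < Sg (-x)" "0 < c" unfolding c_def using Sg_pos[of "-x"] Sg_pos[of "-y"] Sg_pos[of "t-y"]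
        by (auto simp: field_simps)
      then obtain s' where s': "s' > -x" "Sg s' = c" using Sg_surj by blast
      define s where "s = s' + x"
      have s0: "0 < s" using s' s_def by simp
      have Sgs: "Sg (s - x) = c" using s' s_def by simp
      have pre: "Tm x y -` {..t} = {..s}"
      proof (intro set_eqI iffI)
        fix z assume "z \<in> Tm x y -` {..t}"
        then have zt: "Tm x y z \<le> t" by simp
        show "z \<in> {..s}"
        proof (cases "z \<le> 0")
          case True then show ?thesis using s0 by simp
        next
          case False
          then have "Sg (t - y) \<le> Sg (Tm x y z - y)" using zt by (simp add: Sg_le_iff)
          then have "Sg (t - y) * Sg (-x) \<le> Sg (Tm x y z - y) * Sg (-x)" using Sg_pos[of "-x"] by simp
          then have "c * Sg (-y) \<le> Sg (z - x) * Sg (-y)" using Tm_prop(1)[of z x y] False Sg_pos[of "-y"] c_def by simp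
          then have "Sg (s - x) \<le> Sg (z - x)" using Sgs Sg_pos[of "-y"] by simp
          then show ?thesis by (simp add: Sg_le_iff)
        qed
      next
        fix z assume "z \<in> {..s}"
        then have zs: "z \<le> s" by simp
        show "z \<in> Tm x y -` {..t}"
        proof (cases "z \<le> 0")
          case True then show ?thesis using False Tm_nonpos[OF True] by simp
        next
          case False
          have "Sg (s - x) \<le> Sg (z - x)" using zs by (simp add: Sg_le_iff)
          then have "c * Sg (-y) \<le> Sg (z - x) * Sg (-y)" using Sgs Sg_pos[of "-y"] by simp
          then have "Sg (t - y) * Sg (-x) \<le> Sg (Tm x y z - y) * Sg (-x)" using Tm_prop(1)[of z x y] False Sg_pos[of "-y"] c_def by simp
          then have "Sg (t - y) \<le> Sg (Tm x y z - y)" using Sg_pos[of "-x"] by simp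
          then show ?thesis by (simp add: Sg_le_iff)
        qed
      qed
      have "measure (cond_shifted_gauss x) {..s} = 1 - Sg (t - y) / Sg (-y)"
        unfolding csg_cdf_nonneg[OF less_imp_le[OF s0]] Sgs c_def using Sg_pos[of "-x"] by simp
      then show ?thesis using cd pre csg_cdf_nonneg[of t y] False by (simp add: cdf_def)
    qed
  qed
qed

lemma Tm_ge: assumes "0 < z" "x \<le> y" shows "z \<le> Tm x y z"
proof (cases "x = y")
  case True
  have "Sg (Tm x y z - y) * Sg (-x) = Sg (z - y) * Sg (-x)" using Tm_prop(1)[OF assms(1), of x y] True by simp
  then have "Sg (Tm x y z - y) = Sg (z - y)" using Sg_pos[of "-x"] by simp
  then have "Tm x y z - y = z - y" using Sg_inj by metis
  then show ?thesis by simp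
next
  case False
  then have xy: "-y < -x" using assms by simp
  have "Sg (-x + z) * Sg (-y) \<le> Sg (-y + z) * Sg (-x)" using Sg_logconc[OF xy, of z] assms by simp
  then have "Sg (Tm x y z - y) * Sg (-x) \<le> Sg (z - y) * Sg (-x)" using Tm_prop(1)[OF assms(1), of x y]
    by (simp add: mult.commute)
  then have "Sg (Tm x y z - y) \<le> Sg (z - y)" using Sg_pos[of "-x"] by simp
  then show ?thesis by (simp add: Sg_le_iff)
qed

lemma Tm_lt: assumes "0 < z" "x < y" shows "Tm x y z < z + (y - x)"
proof -
  have "Sg (-x) < Sg (-y)" using assms by (simp add: Sg_less_iff)
  then have "Sg (z - x) * Sg (-x) < Sg (z - x) * Sg (-y)" using Sg_pos[of "z-x"] by simp
  then have "Sg (z - x) * Sg (-x) < Sg (Tm x y z - y) * Sg (-x)" using Tm_prop(1)[OF assms(1), of x y] by simp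
  then have "Sg (z + (y - x) - y) < Sg (Tm x y z - y)" using Sg_pos[of "-x"] by simp
  then show ?thesis by (simp add: Sg_less_iff)
qed

lemma coupling_le: assumes "x \<le> y"
  shows "\<exists>mu. is_coupling mu (cond_shifted_gauss x) (cond_shifted_gauss y)
        \<and> (x \<noteq> y \<longrightarrow> (AE p in mu. \<bar>fst p - snd p\<bar> < \<bar>x - y\<bar>))
        \<and> integrable mu (\<lambda>p. \<bar>fst p - snd p\<bar>)
        \<and> integral\<^sup>L mu (\<lambda>p. \<bar>fst p - snd p\<bar>) = mfun y - mfun x"
proof -
  interpret P: prob_space "cond_shifted_gauss x" by (rule csg_prob)
  define T where "T = Tm x y"
  have Tm[measurable]: "T \<in> borel_measurable borel" unfolding T_def by simp
  define mu where "mu = distr (cond_shifted_gauss x) (borel \<Otimes>\<^sub>M borel) (\<lambda>z. (z, T z))"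
  have g[measurable]: "(\<lambda>z. (z, T z)) \<in> measurable (cond_shifted_gauss x) (borel \<Otimes>\<^sub>M borel)" by measurable
  have coup: "is_coupling mu (cond_shifted_gauss x) (cond_shifted_gauss y)"
    unfolding is_coupling_def
  proof (intro conjI)
    show "prob_space mu" unfolding mu_def by (rule P.prob_space_distr[OF g])
    show "sets mu = sets (borel \<Otimes>\<^sub>M borel)" unfolding mu_def by simp
    show "distr mu borel fst = cond_shifted_gauss x"
      unfolding mu_def by (subst distr_distr) (auto simp: comp_def intro!: distr_id2)
    show "distr mu borel snd = cond_shifted_gauss y"
      unfolding mu_def by (subst distr_distr) (auto simp: comp_def T_def Tm_distr)
  qed
  have AEp: "AE z in cond_shifted_gauss x. z \<le> T z \<and> (x < y \<longrightarrow> T z < z + (y - x))"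
    using csg_AE_pos[of x] by eventually_elim (use assms Tm_ge Tm_lt T_def in auto)
  have ae: "x \<noteq> y \<longrightarrow> (AE p in mu. \<bar>fst p - snd p\<bar> < \<bar>x - y\<bar>)"
  proof
    assume "x \<noteq> y"
    then have xy: "x < y" using assms by simp
    have "AE z in cond_shifted_gauss x. \<bar>z - T z\<bar> < \<bar>x - y\<bar>"
      using AEp by eventually_elim (use xy in auto)
    then show "AE p in mu. \<bar>fst p - snd p\<bar> < \<bar>x - y\<bar>"
      unfolding mu_def by (subst AE_distr_iff) auto
  qed
  have iT: "integrable (cond_shifted_gauss x) T"
    using csg_mean(1)[of y] unfolding Tm_distr[of x y, symmetric] T_def[symmetric]
    by (subst (asm) integrable_distr_eq) auto
  have iT2: "integral\<^sup>L (cond_shifted_gauss x) T = mfun y"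
    using csg_mean(2)[of y] unfolding Tm_distr[of x y, symmetric] T_def[symmetric]
    by (subst (asm) integral_distr) auto
  have iz: "integrable (cond_shifted_gauss x) (\<lambda>z. z)" by (rule csg_mean(1))
  have idiff: "integrable (cond_shifted_gauss x) (\<lambda>z. \<bar>z - T z\<bar>)"
    using iT iz by auto
  have int: "integrable mu (\<lambda>p. \<bar>fst p - snd p\<bar>)"
    unfolding mu_def by (subst integrable_distr_eq) (use idiff in auto)
  have "integral\<^sup>L mu (\<lambda>p. \<bar>fst p - snd p\<bar>) = integral\<^sup>L (cond_shifted_gauss x) (\<lambda>z. \<bar>z - T z\<bar>)"
    unfolding mu_def by (subst integral_distr) auto
  also have "\<dots> = integral\<^sup>L (cond_shifted_gauss x) (\<lambda>z. T z - z)"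
    by (rule integral_cong_AE) (use AEp in \<open>auto elim!: eventually_mono\<close>)
  also have "\<dots> = mfun y - mfun x"
    using iT iz iT2 csg_mean(2)[of x] by simp
  finally show ?thesis using coup ae int by blast
qed

definition md :: "real \<Rightarrow> real" where
  "md x = 1 - \<phi> x * (x * Sg (-x) + \<phi> x) / (Sg (-x))\<^sup>2"

lemma mfun_deriv: "(mfun has_real_derivative md x) (at x)"
proof -
  have dS: "((\<lambda>x. Sg (-x)) has_real_derivative \<phi> x) (at x)"
  proof -
    have "((\<lambda>x. Sg (-x)) has_real_derivative (- \<phi> (-x)) * (-1)) (at x)"
      by (rule DERIV_chain2[where f=Sg, OF Sg_deriv]) (auto intro!: derivative_eq_intros)
    then show ?thesis by (simp add: phi_even)
  qed
  have "(mfun has_real_derivative 1 + ((- x * \<phi> x) * Sg (-x) - \<phi> x * \<phi> x) / (Sg (-x) * Sg (-x))) (at x)"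
    unfolding mfun_def[abs_def]
    by (intro DERIV_add DERIV_ident DERIV_divide phi_deriv dS) (use Sg_pos[of "-x"] in auto)
  moreover have "1 + ((- x * \<phi> x) * Sg (-x) - \<phi> x * \<phi> x) / (Sg (-x) * Sg (-x)) = md x"
    unfolding md_def using Sg_pos[of "-x"] by (simp add: field_simps power2_eq_square)
  ultimately show ?thesis by simp
qed

lemma md_cont: "continuous_on UNIV md"
proof -
  have "continuous_on UNIV (\<lambda>x. Sg (-x))"
    by (rule continuous_on_compose2[OF Sg_cont[of UNIV]]) (auto intro!: continuous_intros)
  moreover have "\<And>x. Sg (-x) \<noteq> 0" by (metis Sg_pos less_irrefl)
  ultimately show ?thesis unfolding md_def
    by (intro continuous_intros) auto
qed

lemma k_pos: "0 < x * Sg (-x) + \<phi> x"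
proof -
  interpret P: prob_space "cond_shifted_gauss x" by (rule csg_prob)
  have ae: "AE z in cond_shifted_gauss x. 0 < z" by (rule csg_AE_pos)
  have nn: "0 \<le> mfun x" unfolding csg_mean(2)[symmetric]
    by (rule integral_nonneg_AE) (use ae in \<open>auto elim!: eventually_mono\<close>)
  have "mfun x \<noteq> 0"
  proof
    assume m0: "mfun x = 0"
    have nnAE: "AE z in cond_shifted_gauss x. 0 \<le> z" using ae by (auto elim: eventually_mono)
    have "integral\<^sup>L (cond_shifted_gauss x) (\<lambda>z. z) = 0" using m0 csg_mean(2)[of x] by simp
    then have "AE z in cond_shifted_gauss x. z = 0"
      using integral_nonneg_eq_0_iff_AE[OF csg_mean(1) nnAE] by simp
    then have "AE z in cond_shifted_gauss x. False" using ae by eventually_elim auto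
    then show False by simp
  qed
  then have "0 < mfun x" using nn by simp
  then have "0 < Sg (-x) * mfun x" using Sg_pos[of "-x"] by simp
  moreover have "Sg (-x) * mfun x = x * Sg (-x) + \<phi> x" unfolding mfun_def using Sg_pos[of "-x"] by (simp add: field_simps)
  ultimately show ?thesis by simp
qed

lemma md_lt1: "md x < 1"
  unfolding md_def using k_pos[of x] phi_pos[of x] Sg_pos[of "-x"] by simp

lemma mvt_between:
  assumes d: "\<And>x. (f has_real_derivative f' x) (at x)" and ne: "a \<noteq> b"
  shows "\<exists>\<xi>. min a b \<le> \<xi> \<and> \<xi> \<le> max a b \<and> (f a - f b) / (a - b) = f' \<xi>"
proof (cases "a < b")
  case True
  obtain z where z: "a < z" "z < b" "f b - f a = (b - a) * f' z" using MVT2[OF True d] by blast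
  have "(f a - f b) / (a - b) = f' z" using z True by (simp add: field_simps)
  then show ?thesis using z True by (intro exI[of _ z]) auto
next
  case False
  then have ba: "b < a" using ne by simp
  obtain z where z: "b < z" "z < a" "f a - f b = (a - b) * f' z" using MVT2[OF ba d] by blast
  have "(f a - f b) / (a - b) = f' z" using z ba by (simp add: field_simps)
  then show ?thesis using z ba by (intro exI[of _ z]) auto
qed

definition dd :: "(real \<Rightarrow> real) \<Rightarrow> (real \<Rightarrow> real) \<Rightarrow> real \<times> real \<Rightarrow> real" where
  "dd f f' p = (if fst p = snd p then f' (fst p) else (f (fst p) - f (snd p)) / (fst p - snd p))"

lemma dd_mvt: assumes d: "\<And>x. (f has_real_derivative f' x) (at x)"
  shows "\<exists>\<xi>. min (fst p) (snd p) \<le> \<xi> \<and> \<xi> \<le> max (fst p) (snd p) \<and> dd f f' p = f' \<xi>"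
proof (cases "fst p = snd p")
  case True then show ?thesis unfolding dd_def by (intro exI[of _ "fst p"]) auto
next
  case False then show ?thesis unfolding dd_def using mvt_between[OF d False] by auto
qed

lemma dd_cont: assumes d: "\<And>x. (f has_real_derivative f' x) (at x)" and c: "continuous_on UNIV f'"
  shows "continuous_on UNIV (dd f f')"
proof -
  have fc: "continuous_on UNIV f" using d by (meson DERIV_isCont continuous_at_imp_continuous_on)
  have "isCont (dd f f') p" for p
  proof (cases "fst p = snd p")
    case False
    have op: "open {q :: real \<times> real. fst q \<noteq> snd q}"
      by (rule open_Collect_neq) (auto intro: continuous_intros)
    have ev: "eventually (\<lambda>q. dd f f' q = (f (fst q) - f (snd q)) / (fst q - snd q)) (nhds p)"
      using eventually_nhds_in_open[OF op, of p] False by (auto elim!: eventually_mono simp: dd_def)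
    have "isCont (\<lambda>q. (f (fst q) - f (snd q)) / (fst q - snd q)) p"
    proof -
      have i1: "isCont fst p" "isCont snd p" by (intro continuous_intros)+
      have "isCont (\<lambda>q. f (fst q)) p" "isCont (\<lambda>q. f (snd q)) p"
        using isCont_o2[OF i1(1) DERIV_isCont[OF d]] isCont_o2[OF i1(2) DERIV_isCont[OF d]] by auto
      then show ?thesis using False by (intro continuous_intros) auto
    qed
    then show ?thesis using isCont_cong[OF ev] by simp
  next
    case True
    define c0 where "c0 = fst p"
    have p: "p = (c0, c0)" using True c0_def by (metis prod.collapse)
    have cf': "isCont f' c0" using c by (simp add: continuous_on_eq_continuous_at)
    show ?thesis unfolding continuous_at_eps_delta
    proof (intro allI impI)
      fix e :: real assume e: "e > 0"
      obtain r where r: "r > 0" "\<And>\<xi>. dist \<xi> c0 < r \<Longrightarrow> dist (f' \<xi>) (f' c0) < e"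
        using cf' e unfolding continuous_at_eps_delta by blast
      show "\<exists>r>0. \<forall>q. dist q p < r \<longrightarrow> dist (dd f f' q) (dd f f' p) < e"
      proof (intro exI[of _ r] conjI allI impI)
        fix q assume q: "dist q p < r"
        have q1: "dist (fst q) c0 < r" using dist_fst_le[of q p] q p by simp
        have q2: "dist (snd q) c0 < r" using dist_snd_le[of q p] q p by simp
        obtain \<xi> where xi: "min (fst q) (snd q) \<le> \<xi>" "\<xi> \<le> max (fst q) (snd q)" "dd f f' q = f' \<xi>"
          using dd_mvt[OF d] by blast
        have "dist \<xi> c0 < r" using xi(1,2) q1 q2 by (auto simp: dist_real_def abs_less_iff)
        then show "dist (dd f f' q) (dd f f' p) < e" using r xi(3) p by (simp add: dd_def)
      qed (use r in auto)
    qed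
  qed
  then show ?thesis by (simp add: continuous_on_eq_continuous_at)
qed

theorem lemma3p4:
  "\<exists>\<delta> :: real \<times> real \<Rightarrow> real. continuous_on UNIV \<delta> \<and> (\<forall>p. \<delta> p < 1) \<and>
     (\<forall>x x' :: real. \<exists>mu. is_coupling mu (cond_shifted_gauss x) (cond_shifted_gauss x')
        \<and> (x \<noteq> x' \<longrightarrow> (AE p in mu. \<bar>fst p - snd p\<bar> < \<bar>x - x'\<bar>))
        \<and> integrable mu (\<lambda>p. \<bar>fst p - snd p\<bar>)
        \<and> integral\<^sup>L mu (\<lambda>p. \<bar>fst p - snd p\<bar>) \<le> \<delta> (x, x') * \<bar>x - x'\<bar>)"
proof (intro exI[of _ "dd mfun md"] conjI allI)
  show "continuous_on UNIV (dd mfun md)" by (rule dd_cont[OF mfun_deriv md_cont])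
  show "dd mfun md p < 1" for p
    using dd_mvt[OF mfun_deriv, of p] md_lt1 by metis
  fix x x' :: real
  show "\<exists>mu. is_coupling mu (cond_shifted_gauss x) (cond_shifted_gauss x')
        \<and> (x \<noteq> x' \<longrightarrow> (AE p in mu. \<bar>fst p - snd p\<bar> < \<bar>x - x'\<bar>))
        \<and> integrable mu (\<lambda>p. \<bar>fst p - snd p\<bar>)
        \<and> integral\<^sup>L mu (\<lambda>p. \<bar>fst p - snd p\<bar>) \<le> dd mfun md (x, x') * \<bar>x - x'\<bar>"
  proof (cases "x \<le> x'")
    case True
    then obtain mu where mu: "is_coupling mu (cond_shifted_gauss x) (cond_shifted_gauss x')"
        "x \<noteq> x' \<longrightarrow> (AE p in mu. \<bar>fst p - snd p\<bar> < \<bar>x - x'\<bar>)"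
        "integrable mu (\<lambda>p. \<bar>fst p - snd p\<bar>)"
        "integral\<^sup>L mu (\<lambda>p. \<bar>fst p - snd p\<bar>) = mfun x' - mfun x"
      using coupling_le by blast
    have "mfun x' - mfun x \<le> dd mfun md (x, x') * \<bar>x - x'\<bar>"
    proof (cases "x = x'")
      case True then show ?thesis by simp
    next
      case False
      then have ne: "x - x' \<noteq> 0" by simp
      have "dd mfun md (x, x') * \<bar>x - x'\<bar> = (mfun x - mfun x') / (x - x') * (- (x - x'))"
        using False \<open>x \<le> x'\<close> by (simp add: dd_def)
      also have "\<dots> = mfun x' - mfun x" using ne by (simp add: divide_simps) (simp add: algebra_simps)
      finally show ?thesis by simp
    qed
    then show ?thesis using mu by auto
  next
    case False
    then obtain mu where mu: "is_coupling mu (cond_shifted_gauss x') (cond_shifted_gauss x)"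
        "x' \<noteq> x \<longrightarrow> (AE p in mu. \<bar>fst p - snd p\<bar> < \<bar>x' - x\<bar>)"
        "integrable mu (\<lambda>p. \<bar>fst p - snd p\<bar>)"
        "integral\<^sup>L mu (\<lambda>p. \<bar>fst p - snd p\<bar>) = mfun x - mfun x'"
      using coupling_le[of x' x] by auto
    have sets1[measurable_cong]: "sets mu = sets (borel \<Otimes>\<^sub>M borel)" using mu(1) unfolding is_coupling_def by auto
    have sets2: "prob_space mu" using mu(1) unfolding is_coupling_def by auto
    note sets = sets1 sets2
    have fm[measurable]: "(\<lambda>p. \<bar>fst p - snd p\<bar>) \<in> borel_measurable (borel \<Otimes>\<^sub>M borel :: (real \<times> real) measure)" by measurable
    define sw where "sw = (\<lambda>p::real \<times> real. (snd p, fst p))"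
    have swm[measurable]: "sw \<in> measurable mu (borel \<Otimes>\<^sub>M borel)"
      unfolding sw_def by measurable
    define nu where "nu = distr mu (borel \<Otimes>\<^sub>M borel) sw"
    have "is_coupling nu (cond_shifted_gauss x) (cond_shifted_gauss x')"
      unfolding is_coupling_def
    proof (intro conjI)
      show "prob_space nu" unfolding nu_def by (rule prob_space.prob_space_distr[OF sets(2) swm])
      show "sets nu = sets (borel \<Otimes>\<^sub>M borel)" unfolding nu_def by simp
      show "distr nu borel fst = cond_shifted_gauss x"
        unfolding nu_def using mu(1) unfolding is_coupling_def
        by (subst distr_distr) (auto simp: comp_def sw_def)
      show "distr nu borel snd = cond_shifted_gauss x'"
        unfolding nu_def using mu(1) unfolding is_coupling_def
        by (subst distr_distr) (auto simp: comp_def sw_def)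
    qed
    moreover have "AE p in nu. \<bar>fst p - snd p\<bar> < \<bar>x - x'\<bar>"
      unfolding nu_def using mu(2) False by (subst AE_distr_iff) (simp_all add: sw_def abs_minus_commute)
    moreover have "integrable nu (\<lambda>p. \<bar>fst p - snd p\<bar>)"
      unfolding nu_def using mu(3) by (subst integrable_distr_eq) (simp_all add: sw_def abs_minus_commute)
    moreover have "integral\<^sup>L nu (\<lambda>p. \<bar>fst p - snd p\<bar>) = mfun x - mfun x'"
      unfolding nu_def using mu(4) by (subst integral_distr) (simp_all add: sw_def abs_minus_commute)
    moreover have "mfun x - mfun x' \<le> dd mfun md (x, x') * \<bar>x - x'\<bar>"
    proof -
      have ne: "x - x' \<noteq> 0" using False by simp
      have "dd mfun md (x, x') * \<bar>x - x'\<bar> = (mfun x - mfun x') / (x - x') * (x - x')"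
        using False by (simp add: dd_def)
      also have "\<dots> = mfun x - mfun x'" using ne by simp
      finally show ?thesis by simp
    qed
    ultimately show ?thesis by auto
  qed
qed

end
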